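(* Let $K$ be a field, $G(V,E)$ a finite simple graph, and $\mathfrak{g}$ the $2$-step nilpotent graph Lie algebra associated to $G(V,E)$. Then $$\chi(\mathfrak{g})=\dim\mathfrak{g}-2\nu(G(V,E))=|V|+|E|-2\nu(G(V,E)).$$
   Context: Graph Lie algebra: let $U$ be the $K$-vector space with basis $V$, and $W\subseteq\Lambda^2(U)$ the subspace spanned by $\{v_1\wedge v_2\mid \{v_1,v_2\}\in E\}$. The Lie algebra $\mathfrak{g}$ has underlying space $U\oplus W$ (so $\dim\mathfrak{g}=|V|+|E|$), with $W$ central, and for $v_1,v_2\in V$: $[v_1,v_2]=v_1\wedge v_2$ if $\{v_1,v_2\}\in E$ and $[v_1,v_2]=0$ otherwise. A matching of $G(V,E)$ is a set $S\subseteq E$ of edges such that each vertex lies in at most one edge of $S$; the matching number $\nu(G(V,E))$ is the maximum number of edges in a matching. For a finite-dimensional Lie algebra $\mathfrak{h}$ and $\ell\in\mathfrak{h}^*$, $\mathfrak{h}(\ell)=\{y\in\mathfrak{h}\mid\ell([x,y])=0\ \forall x\in\mathfrak{h}\}$ and the index is $\chi(\mathfrak{h})=\min_{\ell\in\mathfrak{h}^*}\dim\mathfrak{h}(\ell)$. *)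

theory Defs
  imports Complex_Main "HOL-Library.Function_Algebras"
begin

definition simple_graph :: "'v set \<Rightarrow> 'v set set \<Rightarrow> bool" where
  "simple_graph V E \<longleftrightarrow> finite V \<and> (\<forall>e\<in>E. \<exists>a b. a \<in> V \<and> b \<in> V \<and> a \<noteq> b \<and> e = {a, b})"

definition matching :: "'v set set \<Rightarrow> 'v set set \<Rightarrow> bool" where
  "matching E S \<longleftrightarrow> S \<subseteq> E \<and> (\<forall>e1\<in>S. \<forall>e2\<in>S. e1 \<noteq> e2 \<longrightarrow> e1 \<inter> e2 = {})"

definition matching_number :: "'v set set \<Rightarrow> nat" where
  "matching_number E = Max {card S | S. matching E S}"

text \<open>Vectors of the graph Lie algebra: coordinate functions on the basis
  V \<union> E (vertices as Inl, edges as Inr), vanishing off that basis.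
  The basis vector of W for an edge {a,b} with a < b is a \<and> b.\<close>

definition scal :: "'k::field \<Rightarrow> ('i \<Rightarrow> 'k) \<Rightarrow> ('i \<Rightarrow> 'k)" where
  "scal c f = (\<lambda>i. c * f i)"

definition graph_lie_carrier :: "'v set \<Rightarrow> 'v set set \<Rightarrow> (('v + 'v set) \<Rightarrow> 'k::field) set" where
  "graph_lie_carrier V E = {x. \<forall>i. i \<notin> Inl ` V \<union> Inr ` E \<longrightarrow> x i = 0}"

definition graph_lie_bracket ::
  "'v::linorder set \<Rightarrow> 'v set set \<Rightarrow> (('v + 'v set) \<Rightarrow> 'k::field) \<Rightarrow> (('v + 'v set) \<Rightarrow> 'k) \<Rightarrow> (('v + 'v set) \<Rightarrow> 'k)" where
  "graph_lie_bracket V E x y = (\<lambda>i. case i of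
      Inl v \<Rightarrow> 0
    | Inr e \<Rightarrow> (if e \<in> E then
                  x (Inl (Min e)) * y (Inl (Max e)) - x (Inl (Max e)) * y (Inl (Min e))
                else 0))"

definition graph_lie_dim :: "'v set \<Rightarrow> 'v set set \<Rightarrow> 'k::field itself \<Rightarrow> nat" where
  "graph_lie_dim V E _ = vector_space.dim (scal :: 'k \<Rightarrow> _) (graph_lie_carrier V E :: (('v + 'v set) \<Rightarrow> 'k) set)"

definition lin_functional :: "('i \<Rightarrow> 'k::field) set \<Rightarrow> (('i \<Rightarrow> 'k) \<Rightarrow> 'k) \<Rightarrow> bool" where
  "lin_functional S l \<longleftrightarrow> (\<forall>x\<in>S. \<forall>y\<in>S. l (x + y) = l x + l y) \<and> (\<forall>c. \<forall>x\<in>S. l (scal c x) = c * l x)"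

definition stabilizer ::
  "'v::linorder set \<Rightarrow> 'v set set \<Rightarrow> ((('v + 'v set) \<Rightarrow> 'k::field) \<Rightarrow> 'k) \<Rightarrow> (('v + 'v set) \<Rightarrow> 'k) set" where
  "stabilizer V E l = {y \<in> graph_lie_carrier V E. \<forall>x \<in> graph_lie_carrier V E. l (graph_lie_bracket V E x y) = 0}"

definition lie_index :: "'v::linorder set \<Rightarrow> 'v set set \<Rightarrow> 'k::field itself \<Rightarrow> nat" where
  "lie_index V E _ = Min {vector_space.dim (scal :: 'k \<Rightarrow> _) (stabilizer V E l) | l :: (('v + 'v set) \<Rightarrow> 'k) \<Rightarrow> 'k.
                         lin_functional (graph_lie_carrier V E) l}"

end

theory Submission
  imports Defs
begin


interpretation VS: vector_space "scal :: 'k::field \<Rightarrow> ('i \<Rightarrow> 'k) \<Rightarrow> ('i \<Rightarrow> 'k)"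
  by unfold_locales (auto simp: scal_def algebra_simps fun_eq_iff)

lemma scal_apply[simp]: "scal c f i = c * f i" by (simp add: scal_def)

lemma sum_fun_apply: "(sum g F :: 'i \<Rightarrow> 'k::field) p = (\<Sum>y\<in>F. g y p)"
  by (induction F rule: infinite_finite_induct) auto

lemma disj_indep:
  fixes F :: "('i \<Rightarrow> 'k::field) set"
  assumes "finite F" and "\<And>f. f \<in> F \<Longrightarrow> \<exists>p. f p \<noteq> 0 \<and> (\<forall>g\<in>F. g \<noteq> f \<longrightarrow> g p = 0)"
  shows "VS.independent F"
proof (rule VS.independent_if_scalars_zero[OF assms(1)])
  fix u :: "('i \<Rightarrow> 'k) \<Rightarrow> 'k" and x
  assume s: "(\<Sum>x\<in>F. scal (u x) x) = 0" and x: "x \<in> F"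
  obtain p where p: "x p \<noteq> 0" "\<forall>g\<in>F. g \<noteq> x \<longrightarrow> g p = 0" using assms(2)[OF x] by blast
  have "0 = (\<Sum>y\<in>F. scal (u y) y) p" using s by simp
  also have "\<dots> = (\<Sum>y\<in>F. u y * y p)" by (simp add: sum_fun_apply)
  also have "\<dots> = u x * x p"
    using p x assms(1) by (subst sum.remove[of _ x]) (auto intro!: sum.neutral)
  finally show "u x = 0" using p by simp
qed

definition delta :: "'i \<Rightarrow> 'i \<Rightarrow> 'k::field" where "delta i = (\<lambda>j. if j = i then 1 else 0)"

lemma coord_span:
  assumes "finite I" and "\<forall>i. i \<notin> I \<longrightarrow> (y::'i \<Rightarrow> 'k::field) i = 0"
  shows "y \<in> VS.span (delta ` I)"
proof -
  have "y = (\<Sum>i\<in>I. scal (y i) (delta i))"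
  proof
    fix x
    have "(\<Sum>i\<in>I. y i * (if x = i then 1 else 0)) = (\<Sum>i\<in>I. if x = i then y i else 0)"
      by (rule sum.cong) auto
    also have "\<dots> = y x" using assms by (cases "x \<in> I") (auto simp: sum.delta)
    finally show "y x = (\<Sum>i\<in>I. scal (y i) (delta i)) x" by (simp add: sum_fun_apply delta_def)
  qed
  also have "\<dots> \<in> VS.span (delta ` I)"
    by (intro VS.span_sum VS.span_scale VS.span_base) auto
  finally show ?thesis .
qed

lemma coord_dim:
  assumes "finite I"
  shows "VS.dim {y :: 'i \<Rightarrow> 'k::field. \<forall>i. i \<notin> I \<longrightarrow> y i = 0} = card I"
proof (rule VS.dim_unique[of "delta ` I"])
  show "delta ` I \<subseteq> {y :: 'i \<Rightarrow> 'k. \<forall>i. i \<notin> I \<longrightarrow> y i = 0}" by (auto simp: delta_def)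
  show "{y :: 'i \<Rightarrow> 'k. \<forall>i. i \<notin> I \<longrightarrow> y i = 0} \<subseteq> VS.span (delta ` I)"
    using coord_span[OF assms] by blast
  show "VS.independent (delta ` I :: ('i \<Rightarrow> 'k) set)"
    using assms by (intro disj_indep) (auto simp: delta_def)
  have "inj_on (delta :: 'i \<Rightarrow> 'i \<Rightarrow> 'k) I"
    by (auto simp: inj_on_def delta_def fun_eq_iff)
  then show "card (delta ` I :: ('i \<Rightarrow> 'k) set) = card I" by (simp add: card_image)
qed

lemma indep_card_le_dim:
  fixes T W :: "('i \<Rightarrow> 'k::field) set"
  assumes "VS.independent B" "B \<subseteq> T" "T \<subseteq> VS.span W" "finite W"
  shows "finite B \<and> card B \<le> VS.dim T"
proof -
  obtain C where C: "B \<subseteq> C" "C \<subseteq> T" "VS.independent C" "T \<subseteq> VS.span C"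
    using VS.maximal_independent_subset_extend[OF assms(2,1)] by blast
  have fC: "finite C" using VS.independent_span_bound[OF assms(4) C(3)] C(2) assms(3) by blast
  have "card C = VS.dim T" using VS.basis_card_eq_dim C by blast
  then show ?thesis using C(1) fC card_mono finite_subset by metis
qed

lemma dim_mono_fin:
  fixes S T W :: "('i \<Rightarrow> 'k::field) set"
  assumes "S \<subseteq> T" "T \<subseteq> VS.span W" "finite W"
  shows "VS.dim S \<le> VS.dim T"
proof -
  obtain B where B: "B \<subseteq> S" "VS.independent B" "S \<subseteq> VS.span B" "card B = VS.dim S"
    using VS.basis_exists by blast
  show ?thesis using indep_card_le_dim[OF B(2) _ assms(2,3)] B assms(1) by auto
qed

lemma dim_hyperplane:
  fixes S W :: "('i \<Rightarrow> 'k::field) set" and \<phi> :: "('i \<Rightarrow> 'k) \<Rightarrow> 'k"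
  assumes sub: "VS.subspace S" and SW: "S \<subseteq> VS.span W" "finite W"
    and add: "\<And>x y. \<phi> (x + y) = \<phi> x + \<phi> y" and sc: "\<And>c x. \<phi> (scal c x) = c * \<phi> x"
  shows "VS.dim S \<le> VS.dim {x\<in>S. \<phi> x = 0} + 1"
proof -
  obtain B where B: "B \<subseteq> S" "VS.independent B" "S \<subseteq> VS.span B" "card B = VS.dim S"
    using VS.basis_exists by blast
  obtain C where C: "C \<subseteq> {x\<in>S. \<phi> x = 0}" "VS.independent C" "{x\<in>S. \<phi> x = 0} \<subseteq> VS.span C"
      "card C = VS.dim {x\<in>S. \<phi> x = 0}"
    using VS.basis_exists by blast
  have fC: "finite C" using VS.independent_span_bound[OF SW(2) C(2)] C(1) SW(1) by blast
  show ?thesis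
  proof (cases "\<forall>b\<in>B. \<phi> b = 0")
    case True
    then have "S \<subseteq> VS.span C"
      using B C(3) VS.span_mono VS.span_span by (smt (verit, del_insts) VS.span_minimal VS.subspace_span mem_Collect_eq subset_eq)
    then have "VS.dim S \<le> card C" using VS.dim_le_card fC by blast
    then show ?thesis using C(4) by simp
  next
    case False
    then obtain b0 where b0: "b0 \<in> B" "\<phi> b0 \<noteq> 0" by blast
    have "B \<subseteq> VS.span (insert b0 C)"
    proof
      fix b assume b: "b \<in> B"
      define b' where "b' = b - scal (\<phi> b / \<phi> b0) b0"
      have "b' \<in> S" unfolding b'_def using B(1) b b0 sub
        by (meson VS.subspace_diff VS.subspace_scale subsetD)
      moreover have "\<phi> b' = 0"
      proof -
        have "\<phi> b = \<phi> b' + \<phi> (scal (\<phi> b / \<phi> b0) b0)" unfolding b'_def by (metis add diff_add_cancel)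
        then show ?thesis using sc b0(2) by simp
      qed
      ultimately have "b' \<in> VS.span (insert b0 C)"
        using C(3) VS.span_mono[of C "insert b0 C"] by blast
      moreover have "scal (\<phi> b / \<phi> b0) b0 \<in> VS.span (insert b0 C)"
        by (intro VS.span_scale VS.span_base) simp
      ultimately have "b' + scal (\<phi> b / \<phi> b0) b0 \<in> VS.span (insert b0 C)"
        by (rule VS.span_add)
      then show "b \<in> VS.span (insert b0 C)" unfolding b'_def by simp
    qed
    then have "S \<subseteq> VS.span (insert b0 C)"
      using B(3) by (meson VS.span_minimal VS.subspace_span subset_trans)
    then have "VS.dim S \<le> card (insert b0 C)" using VS.dim_le_card fC by blast
    also have "\<dots> \<le> card C + 1" using fC by (simp add: card_insert_if)
    finally show ?thesis using C(4) by simp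
  qed
qed



definition pw :: "'v set set \<Rightarrow> bool" where
  "pw M \<longleftrightarrow> (\<forall>e1\<in>M. \<forall>e2\<in>M. e1 \<noteq> e2 \<longrightarrow> e1 \<inter> e2 = {})"

definition dbl :: "'v set \<Rightarrow> bool" where "dbl e \<longleftrightarrow> (\<exists>a b. a \<noteq> b \<and> e = {a, b})"

lemma pw_subset: "pw M \<Longrightarrow> N \<subseteq> M \<Longrightarrow> pw N" unfolding pw_def by blast

lemma pw_UnionD: "pw M \<Longrightarrow> e1 \<in> M \<Longrightarrow> e2 \<in> M \<Longrightarrow> x \<in> e1 \<Longrightarrow> x \<in> e2 \<Longrightarrow> e1 = e2"
  unfolding pw_def by blast

lemma pw_insert_iff: "pw (insert x S) \<longleftrightarrow> pw S \<and> (\<forall>e\<in>S. e \<noteq> x \<longrightarrow> x \<inter> e = {})"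
  unfolding pw_def by blast

lemma Union_remove: "pw M \<Longrightarrow> e \<in> M \<Longrightarrow> \<Union>(M - {e}) = \<Union>M - e"
  unfolding pw_def by blast

lemma dbl_other: "dbl e \<Longrightarrow> t \<in> e \<Longrightarrow> \<exists>a. a \<noteq> t \<and> e = {t, a}"
proof -
  assume "dbl e" "t \<in> e"
  then obtain a b where ab: "a \<noteq> b" "e = {a, b}" unfolding dbl_def by blast
  then show ?thesis using \<open>t \<in> e\<close> by (cases "t = a") (auto simp: insert_commute)
qed

lemma altpath:
  assumes "finite M" "finite N" "\<forall>e\<in>M\<union>N. dbl e" "pw M" "pw N" "t \<in> \<Union>M" "t \<notin> \<Union>N"
  shows "(\<exists>N'. N' \<subseteq> M \<union> N \<and> pw N' \<and> card N' > card N)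
       \<or> (\<exists>M' w. M' \<subseteq> M \<union> N \<and> pw M' \<and> card M' = card M \<and> \<Union>M' = (\<Union>M - {t}) \<union> {w}
              \<and> w \<notin> \<Union>M \<and> w \<noteq> t)"
  using assms
proof (induction "card M" arbitrary: M N t rule: less_induct)
  case less
  note fM = less.prems(1) and fN = less.prems(2) and dM = less.prems(3) and pM = less.prems(4)
    and pN = less.prems(5) and tM = less.prems(6) and tN = less.prems(7)
  obtain e0 where e0: "e0 \<in> M" "t \<in> e0" using tM by blast
  obtain a where a: "a \<noteq> t" "e0 = {t, a}" using dbl_other[of e0 t] dM e0 by blast
  show ?case
  proof (cases "a \<in> \<Union>N")
    case False
    define N' where "N' = insert e0 N"
    have "e0 \<notin> N" using tN e0 by blast
    then have "card N' = card N + 1" using fN N'_def by simp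
    moreover have "pw N'" using pN tN False a unfolding N'_def pw_def by blast
    moreover have "N' \<subseteq> M \<union> N" using e0 N'_def by blast
    ultimately show ?thesis by auto
  next
    case True
    then obtain e1 where e1: "e1 \<in> N" "a \<in> e1" by blast
    obtain b where b: "b \<noteq> a" "e1 = {a, b}" using dbl_other[of e1 a] dM e1 by blast
    have bt: "b \<noteq> t" using tN e1 b by blast
    have a0: "a \<in> e0" "t \<in> e0" using a by auto
    have b1': "b \<in> e1" using b by auto
    have aM: "\<forall>e\<in>M - {e0}. a \<notin> e" using pw_UnionD[OF pM _ e0(1) _ a0(1)] by blast
    have tM0: "\<forall>e\<in>M - {e0}. t \<notin> e" using pw_UnionD[OF pM _ e0(1) _ a0(2)] by blast
    have aN: "\<forall>e\<in>N - {e1}. a \<notin> e" using pw_UnionD[OF pN _ e1(1) _ e1(2)] by blast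
    have bN: "\<forall>e\<in>N - {e1}. b \<notin> e" using pw_UnionD[OF pN _ e1(1) _ b1'] by blast
    have tN0: "\<forall>e\<in>N. t \<notin> e" using tN by blast
    show ?thesis
    proof (cases "b \<in> \<Union>M")
      case False
      define M' where "M' = insert e1 (M - {e0})"
      have "e1 \<notin> M - {e0}" using False b by blast
      then have "card M' = card (M - {e0}) + 1" using fM M'_def by simp
      also have "\<dots> = card M" using e0 fM by (metis card_Suc_Diff1 Suc_eq_plus1)
      finally have c: "card M' = card M" .
      have "pw (M - {e0})" using pw_subset pM by blast
      moreover have "\<forall>e\<in>M - {e0}. e1 \<inter> e = {}" using aM False b by auto
      ultimately have p: "pw M'" unfolding M'_def pw_insert_iff by blast
      have U: "\<Union>M' = (\<Union>M - {t}) \<union> {b}"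
        using Union_remove[OF pM e0(1)] a b e0 unfolding M'_def by auto
      have S: "M' \<subseteq> M \<union> N" using e1 M'_def by blast
      show ?thesis
        by (rule disjI2, rule exI[of _ M'], rule exI[of _ b]) (use c False bt p U S in simp)
    next
      case bM: True
      define M0 where "M0 = M - {e0}"
      define N0 where "N0 = N - {e1}"
      have cM0: "card M0 < card M" using e0 fM M0_def by (metis card_Diff1_less)
      have b0: "b \<in> \<Union>M0" using bM bt b Union_remove[OF pM e0(1)] a M0_def by auto
      have b1: "b \<notin> \<Union>N0" using bN N0_def by blast
      have IH: "(\<exists>N'. N' \<subseteq> M0 \<union> N0 \<and> pw N' \<and> card N' > card N0)
       \<or> (\<exists>M' w. M' \<subseteq> M0 \<union> N0 \<and> pw M' \<and> card M' = card M0 \<and> \<Union>M' = (\<Union>M0 - {b}) \<union> {w}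
              \<and> w \<notin> \<Union>M0 \<and> w \<noteq> b)"
      proof -
        have fM0: "finite M0" using fM M0_def by simp
        have fN0: "finite N0" using fN N0_def by simp
        have pM0: "pw M0" using pw_subset[OF pM, of M0] M0_def by blast
        have pN0: "pw N0" using pw_subset[OF pN, of N0] N0_def by blast
        have dMN0: "\<forall>e\<in>M0\<union>N0. dbl e" using dM M0_def N0_def by blast
        show ?thesis using less.hyps[OF cM0 fM0 fN0 dMN0 pM0 pN0 b0 b1] .
      qed
      have ta0: "t \<notin> \<Union>(M0 \<union> N0)" "a \<notin> \<Union>(M0 \<union> N0)"
        using aM tM0 aN tN0 unfolding M0_def N0_def by blast+
      show ?thesis
      proof (cases "\<exists>N'. N' \<subseteq> M0 \<union> N0 \<and> pw N' \<and> card N' > card N0")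
        case True
        then obtain N' where N': "N' \<subseteq> M0 \<union> N0" "pw N'" "card N' > card N0" by blast
        have fN': "finite N'" using N'(1) fM fN M0_def N0_def finite_subset by blast
        have "e0 \<notin> N'" using N'(1) ta0 e0 by blast
        then have "card (insert e0 N') = card N' + 1" using fN' by simp
        moreover have "card N = card N0 + 1" using e1 fN N0_def by (metis card_Suc_Diff1 Suc_eq_plus1)
        moreover have "pw (insert e0 N')" using N'(2) ta0 a N'(1) unfolding pw_insert_iff by blast
        moreover have "insert e0 N' \<subseteq> M \<union> N" using N'(1) e0 M0_def N0_def by blast
        ultimately show ?thesis using N'(3) by (metis add_less_mono1)
      next
        case False
        then obtain M' w where M': "M' \<subseteq> M0 \<union> N0" "pw M'" "card M' = card M0"
            "\<Union>M' = (\<Union>M0 - {b}) \<union> {w}" "w \<notin> \<Union>M0" "w \<noteq> b"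
          using IH by blast
        have fM': "finite M'" using M'(1) fM fN M0_def N0_def finite_subset by blast
        have wU: "w \<in> \<Union>(M0 \<union> N0)" using M'(1,4) by blast
        have aM': "a \<notin> \<Union>M'" using M'(1) ta0 by blast
        have bM': "b \<notin> \<Union>M'" using M'(4,6) by blast
        have "e1 \<notin> M'" using bM' b by blast
        then have "card (insert e1 M') = card M' + 1" using fM' by simp
        also have "\<dots> = card M" using M'(3) M0_def e0 fM by (metis card_Suc_Diff1 Suc_eq_plus1)
        finally have c: "card (insert e1 M') = card M" .
        have "\<forall>e\<in>M'. e1 \<inter> e = {}" using aM' bM' b by auto
        then have p: "pw (insert e1 M')" using M'(2) unfolding pw_insert_iff by blast
        have U: "\<Union>(insert e1 M') = (\<Union>M - {t}) \<union> {w}"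
          using M'(4) b0 b Union_remove[OF pM e0(1)] a e0 unfolding M0_def by auto
        have w1: "w \<notin> \<Union>M" using M'(5) wU ta0 Union_remove[OF pM e0(1)] a unfolding M0_def by auto
        have w2: "w \<noteq> t" using wU ta0 by blast
        have S: "insert e1 M' \<subseteq> M \<union> N" using M'(1) e1 M0_def N0_def by blast
        show ?thesis
          by (rule disjI2, rule exI[of _ "insert e1 M'"], rule exI[of _ w]) (use c p U w1 w2 S in simp)
      qed
    qed
  qed
qed

definition adj :: "'v set set \<Rightarrow> ('v \<times> 'v) set" where "adj E = {(a, b). {a, b} \<in> E}"

lemma sg_finE: "simple_graph V E \<Longrightarrow> finite E"
proof -
  assume s: "simple_graph V E"
  then have "E \<subseteq> Pow V" unfolding simple_graph_def by auto
  moreover have "finite V" using s unfolding simple_graph_def by simp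
  ultimately show ?thesis by (meson finite_Pow_iff finite_subset)
qed

lemma sg_dbl: "simple_graph V E \<Longrightarrow> e \<in> E \<Longrightarrow> dbl e"
  unfolding simple_graph_def dbl_def by blast

lemma sg_sub: "simple_graph V E \<Longrightarrow> e \<in> E \<Longrightarrow> e \<subseteq> V"
  unfolding simple_graph_def by auto

lemma matching_iff: "matching E S \<longleftrightarrow> S \<subseteq> E \<and> pw S"
  unfolding matching_def pw_def by blast

lemma nu_finite: "simple_graph V E \<Longrightarrow> finite {card S | S. matching E S}"
proof -
  assume s: "simple_graph V E"
  have "{card S | S. matching E S} \<subseteq> card ` Pow E" unfolding matching_def by auto
  moreover have "finite (card ` Pow E)" using sg_finE[OF s] by simp
  ultimately show ?thesis by (rule finite_subset)
qed

lemma nu_ge: "simple_graph V E \<Longrightarrow> matching E S \<Longrightarrow> card S \<le> matching_number E"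
  unfolding matching_number_def using nu_finite by (intro Max_ge) blast+

lemma nu_ex: "simple_graph V E \<Longrightarrow> \<exists>M. matching E M \<and> card M = matching_number E"
proof -
  assume s: "simple_graph V E"
  have "matching E {}" unfolding matching_def by blast
  then have "{card S | S. matching E S} \<noteq> {}" by blast
  then have "matching_number E \<in> {card S | S. matching E S}"
    unfolding matching_number_def using Max_in nu_finite[OF s] by blast
  then show ?thesis by auto
qed

lemma matching_finite: "simple_graph V E \<Longrightarrow> matching E M \<Longrightarrow> finite M"
  using sg_finE unfolding matching_def by (meson finite_subset)

lemma card_Union_matching:
  assumes s: "simple_graph V E" and m: "matching E M"
  shows "card (\<Union>M) = 2 * card M"
proof -
  have fM: "finite M" using matching_finite[OF s m] .
  have "\<forall>e\<in>M. dbl e" using m sg_dbl[OF s] unfolding matching_def by blast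
  then have c2: "\<forall>e\<in>M. card e = 2" unfolding dbl_def by auto
  have "\<forall>e\<in>M. finite e" using c2 by (metis card.infinite zero_neq_numeral)
  moreover have "pairwise disjnt M" using m unfolding matching_def pairwise_def disjnt_def by blast
  ultimately have "card (\<Union>M) = sum card M" using fM by (simp add: card_Union_disjoint)
  also have "\<dots> = 2 * card M" using c2 by simp
  finally show ?thesis .
qed

lemma gallai:
  assumes s: "simple_graph V E"
    and H: "\<forall>v\<in>V. \<exists>N. matching E N \<and> card N = matching_number E \<and> v \<notin> \<Union>N"
  shows "matching E M \<Longrightarrow> card M = matching_number E \<Longrightarrow> u \<notin> \<Union>M \<Longrightarrow> v \<notin> \<Union>M
     \<Longrightarrow> u \<noteq> v \<Longrightarrow> (u, v) \<in> adj E ^^ n \<Longrightarrow> False"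
proof (induction n arbitrary: M u v rule: less_induct)
  case (less n)
  note mM = less.prems(1) and cM = less.prems(2) and uM = less.prems(3) and vM = less.prems(4)
    and uv = less.prems(5) and path = less.prems(6)
  have one: False if "matching E M'" "card M' = matching_number E" "x \<notin> \<Union>M'" "y \<notin> \<Union>M'"
    "{x, y} \<in> E" for M' x y
  proof -
    have "{x, y} \<notin> M'" using that(3) by blast
    have "matching E (insert {x, y} M')"
      using that unfolding matching_iff pw_insert_iff by blast
    then have "card (insert {x, y} M') \<le> matching_number E" using nu_ge[OF s] by blast
    moreover have "card (insert {x, y} M') = card M' + 1"
      using \<open>{x, y} \<notin> M'\<close> matching_finite[OF s that(1)] by simp
    ultimately show False using that(2) by simp
  qed
  have "n \<noteq> 0" using path uv by (cases n) simp_all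
  then obtain m where n: "n = Suc m" using not0_implies_Suc by blast
  obtain t where ut: "(u, t) \<in> adj E" and tv: "(t, v) \<in> adj E ^^ m"
    using relpow_Suc_D2[OF path[unfolded n]] by blast
  have utE: "{u, t} \<in> E" using ut unfolding adj_def by simp
  show False
  proof (cases "t = v")
    case True
    then show False using one[OF mM cM uM vM] utE by blast
  next
    case False
    have tu: "t \<noteq> u" using sg_dbl[OF s utE] unfolding dbl_def by (metis doubleton_eq_iff insert_absorb2)
    have m0: "m \<noteq> 0" using False tv by (cases m) simp_all
    have tV: "t \<in> V" using sg_sub[OF s utE] by blast
    obtain N where N: "matching E N" "card N = matching_number E" "t \<notin> \<Union>N" using H tV by blast
    have ut1: "(u, t) \<in> adj E ^^ 1" using ut by simp
    have lt1: "1 < n" using n m0 by simp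
    show False
    proof (cases "t \<in> \<Union>M")
      case False
      show False using less.IH[OF lt1 mM cM uM False tu[symmetric] ut1] .
    next
      case True
      have fM: "finite M" using matching_finite[OF s mM] .
      have fN: "finite N" using matching_finite[OF s N(1)] .
      have MN: "M \<union> N \<subseteq> E" using mM N(1) by (simp add: matching_iff)
      have d: "\<forall>e\<in>M \<union> N. dbl e" using MN sg_dbl[OF s] by blast
      have pM: "pw M" "pw N" using mM N(1) by (simp_all add: matching_iff)
      from altpath[OF fM fN d pM True N(3)] show False
      proof
        assume "\<exists>N'. N' \<subseteq> M \<union> N \<and> pw N' \<and> card N' > card N"
        then obtain N' where "N' \<subseteq> M \<union> N" "pw N'" "card N' > card N" by blast
        moreover have "matching E N'" using calculation(1,2) MN unfolding matching_iff by blast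
        ultimately show False using nu_ge[OF s, of N'] N(2) by simp
      next
        assume "\<exists>M' w. M' \<subseteq> M \<union> N \<and> pw M' \<and> card M' = card M \<and> \<Union>M' = (\<Union>M - {t}) \<union> {w}
              \<and> w \<notin> \<Union>M \<and> w \<noteq> t"
        then obtain M' w where M': "M' \<subseteq> M \<union> N" "pw M'" "card M' = card M"
          "\<Union>M' = (\<Union>M - {t}) \<union> {w}" "w \<notin> \<Union>M" "w \<noteq> t" by blast
        have mM': "matching E M'" using M'(1,2) MN unfolding matching_iff by blast
        have cM': "card M' = matching_number E" using M'(3) cM by simp
        have tM': "t \<notin> \<Union>M'" using M'(4,6) by blast
        show False
        proof (cases "w = u")
          case False
          have "u \<notin> \<Union>M'" using M'(4) uM False by blast
          then show False using less.IH[OF lt1 mM' cM' _ tM' tu[symmetric] ut1] by blast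
        next
          case True
          have "v \<notin> \<Union>M'" using M'(4) vM True uv by blast
          moreover have "m < n" using n by simp
          ultimately show False using less.IH[OF _ mM' cM' tM' _ \<open>t \<noteq> v\<close> tv] by blast
        qed
      qed
    qed
  qed
qed



lemma odd_kernel:
  fixes A :: "'v \<Rightarrow> 'v \<Rightarrow> 'k::field"
  assumes "finite S" "odd (card S)" "\<forall>a\<in>S. A a a = 0" "\<forall>a\<in>S. \<forall>b\<in>S. A b a = - A a b"
  shows "\<exists>z. (\<forall>b. b \<notin> S \<longrightarrow> z b = 0) \<and> (\<exists>b\<in>S. z b \<noteq> 0) \<and> (\<forall>a\<in>S. (\<Sum>b\<in>S. A a b * z b) = 0)"
  using assms
proof (induction "card S" arbitrary: S A rule: less_induct)
  case less
  note fS = less.prems(1) and oS = less.prems(2) and dA = less.prems(3) and sA = less.prems(4)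
  show ?case
  proof (cases "\<forall>a\<in>S. \<forall>b\<in>S. A a b = 0")
    case True
    have "S \<noteq> {}" using oS by auto
    then obtain s where s: "s \<in> S" by blast
    define z where "z = (\<lambda>b. if b = s then (1::'k) else 0)"
    show ?thesis
      by (rule exI[of _ z]) (use s True in \<open>auto simp: z_def\<close>)
  next
    case False
    then obtain v w where v: "v \<in> S" and w: "w \<in> S" and al: "A v w \<noteq> 0" by blast
    define \<alpha> where "\<alpha> = A v w"
    have al0: "\<alpha> \<noteq> 0" using al \<alpha>_def by simp
    have vw: "v \<noteq> w" using dA v al by auto
    define S' where "S' = S - {v, w}"
    have fS': "finite S'" using fS S'_def by simp
    have "card {v, w} \<le> card S" using fS v w by (intro card_mono) auto
    then have cS: "card S = card S' + 2" using fS v w vw unfolding S'_def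
      by (simp add: card_Diff_subset)
    have lt: "card S' < card S" using cS by simp
    have oS': "odd (card S')" using oS cS by simp
    define A' where "A' = (\<lambda>i j. A i j + (A i v * A w j - A i w * A v j) / \<alpha>)"
    have dA': "\<forall>a\<in>S'. A' a a = 0"
    proof
      fix a assume a: "a \<in> S'"
      then have aS: "a \<in> S" using S'_def by blast
      have "A w a = - A a w" "A v a = - A a v" using sA[rule_format, OF aS w] sA[rule_format, OF aS v] by auto
      then show "A' a a = 0" using dA aS unfolding A'_def by (simp add: algebra_simps)
    qed
    have sA': "\<forall>a\<in>S'. \<forall>b\<in>S'. A' b a = - A' a b"
    proof (intro ballI)
      fix a b assume a: "a \<in> S'" and b: "b \<in> S'"
      then have aS: "a \<in> S" and bS: "b \<in> S" using S'_def by blast+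
      have e: "A b a = - A a b" "A w a = - A a w" "A v a = - A a v" "A w b = - A b w" "A v b = - A b v"
        using sA[rule_format, OF aS bS] sA[rule_format, OF aS w] sA[rule_format, OF aS v]
          sA[rule_format, OF bS w] sA[rule_format, OF bS v] by auto
      show "A' b a = - A' a b" unfolding A'_def using e al0 by (simp add: field_simps)
    qed
    obtain z' where z': "\<forall>b. b \<notin> S' \<longrightarrow> z' b = 0" "\<exists>b\<in>S'. z' b \<noteq> 0"
      "\<forall>a\<in>S'. (\<Sum>b\<in>S'. A' a b * z' b) = 0"
      using less.hyps[OF lt fS' oS' dA' sA'] by blast
    define zv where "zv = (\<Sum>j\<in>S'. A w j * z' j) / \<alpha>"
    define zw where "zw = - (\<Sum>j\<in>S'. A v j * z' j) / \<alpha>"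
    define z where "z = z'(v := zv, w := zw)"
    have Sdec: "S = insert v (insert w S')" using v w S'_def by blast
    have vS': "v \<notin> S'" "w \<notin> S'" using S'_def by auto
    have zS': "\<forall>j\<in>S'. z j = z' j" using vS' z_def by auto
    have sumS: "(\<Sum>b\<in>S. A a b * z b) = A a v * zv + A a w * zw + (\<Sum>j\<in>S'. A a j * z' j)" for a
    proof -
      have "(\<Sum>b\<in>S. A a b * z b) = A a v * z v + A a w * z w + (\<Sum>j\<in>S'. A a j * z j)"
        unfolding Sdec using fS' vS' vw by (simp add: algebra_simps)
      also have "(\<Sum>j\<in>S'. A a j * z j) = (\<Sum>j\<in>S'. A a j * z' j)"
        using zS' by (intro sum.cong) auto
      finally show ?thesis using vw unfolding z_def by simp
    qed
    have ker: "\<forall>a\<in>S. (\<Sum>b\<in>S. A a b * z b) = 0"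
    proof
      fix a assume aS: "a \<in> S"
      consider "a = v" | "a = w" | "a \<in> S'" using aS Sdec by blast
      then show "(\<Sum>b\<in>S. A a b * z b) = 0"
      proof cases
        case 1
        then show ?thesis unfolding sumS using dA v al0 by (simp add: zw_def \<alpha>_def field_simps)
      next
        case 2
        have "A w v = - \<alpha>" using sA[rule_format, OF v w] \<alpha>_def by auto
        then show ?thesis unfolding sumS using 2 dA w al0 by (simp add: zv_def field_simps)
      next
        case 3
        have "(\<Sum>j\<in>S'. A' a j * z' j) = (\<Sum>j\<in>S'. A a j * z' j + (A a v / \<alpha>) * (A w j * z' j)
                - (A a w / \<alpha>) * (A v j * z' j))"
          by (rule sum.cong) (use al0 in \<open>simp_all add: A'_def field_simps\<close>)
        also have "\<dots> = (\<Sum>j\<in>S'. A a j * z' j) + (A a v / \<alpha>) * (\<Sum>j\<in>S'. A w j * z' j)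
                - (A a w / \<alpha>) * (\<Sum>j\<in>S'. A v j * z' j)"
          by (simp add: sum.distrib sum_subtractf sum_distrib_left)
        also have "\<dots> = A a v * zv + A a w * zw + (\<Sum>j\<in>S'. A a j * z' j)"
          unfolding zv_def zw_def by (simp add: algebra_simps)
        finally have "A a v * zv + A a w * zw + (\<Sum>j\<in>S'. A a j * z' j) = (\<Sum>j\<in>S'. A' a j * z' j)" ..
        then show ?thesis unfolding sumS using z'(3) 3 by simp
      qed
    qed
    have "\<forall>b. b \<notin> S \<longrightarrow> z b = 0" using z'(1) Sdec z_def by auto
    moreover have "\<exists>b\<in>S. z b \<noteq> 0" using z'(2) zS' Sdec by auto
    ultimately show ?thesis using ker by blast
  qed
qed



definition cA :: "'v::linorder set set \<Rightarrow> ('v set \<Rightarrow> 'k) \<Rightarrow> 'v \<Rightarrow> 'v \<Rightarrow> 'k::field" where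
  "cA E c a b = (if {a, b} \<in> E then (if a < b then c {a, b} else - c {a, b}) else 0)"

definition KERF :: "'v set \<Rightarrow> 'w set \<Rightarrow> ('v \<Rightarrow> 'v \<Rightarrow> 'k) \<Rightarrow> (('v + 'w) \<Rightarrow> 'k::field) set" where
  "KERF V W A = {y. (\<forall>i. i \<notin> Inl ` V \<union> Inr ` W \<longrightarrow> y i = 0) \<and> (\<forall>a\<in>V. (\<Sum>b\<in>V. A a b * y (Inl b)) = 0)}"

lemma bracket_sum:
  assumes "finite E"
  shows "graph_lie_bracket V E x y = (\<Sum>e\<in>E. scal (x (Inl (Min e)) * y (Inl (Max e)) - x (Inl (Max e)) * y (Inl (Min e))) (delta (Inr e)))"
proof
  fix i
  show "graph_lie_bracket V E x y i = (\<Sum>e\<in>E. scal (x (Inl (Min e)) * y (Inl (Max e)) - x (Inl (Max e)) * y (Inl (Min e))) (delta (Inr e))) i"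
  proof (cases i)
    case (Inl v)
    then show ?thesis by (simp add: graph_lie_bracket_def sum_fun_apply delta_def)
  next
    case (Inr e)
    have "(\<Sum>e'\<in>E. (x (Inl (Min e')) * y (Inl (Max e')) - x (Inl (Max e')) * y (Inl (Min e'))) * (if Inr e = Inr e' then 1 else 0))
       = (\<Sum>e'\<in>E. if e = e' then (x (Inl (Min e')) * y (Inl (Max e')) - x (Inl (Max e')) * y (Inl (Min e'))) else 0)"
      by (rule sum.cong) auto
    also have "\<dots> = (if e \<in> E then x (Inl (Min e)) * y (Inl (Max e)) - x (Inl (Max e)) * y (Inl (Min e)) else 0)"
      using assms by (simp add: sum.delta)
    finally show ?thesis using Inr by (simp add: graph_lie_bracket_def sum_fun_apply delta_def)
  qed
qed

lemma delta_carrier: "i \<in> Inl ` V \<union> Inr ` E \<Longrightarrow> delta i \<in> graph_lie_carrier V E"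
  by (auto simp: graph_lie_carrier_def delta_def)

lemma linD1: "lin_functional S l \<Longrightarrow> x \<in> S \<Longrightarrow> y \<in> S \<Longrightarrow> l (x + y) = l x + l y"
  by (simp add: lin_functional_def)

lemma linD2: "lin_functional S l \<Longrightarrow> x \<in> S \<Longrightarrow> l (scal c x) = c * l x"
  by (simp add: lin_functional_def)

lemma lin_zero:
  fixes l :: "(('v + 'v set) \<Rightarrow> 'a::field) \<Rightarrow> 'a"
  shows "lin_functional (graph_lie_carrier V E) l \<Longrightarrow> l 0 = 0"
proof -
  assume l: "lin_functional (graph_lie_carrier V E) l"
  have z: "(0 :: ('v + 'v set) \<Rightarrow> 'a) \<in> graph_lie_carrier V E" by (simp add: graph_lie_carrier_def)
  have "l (scal 0 0) = 0 * l 0" using linD2[OF l z] .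
  moreover have "scal 0 (0 :: ('v + 'v set) \<Rightarrow> 'a) = 0" by (simp add: scal_def fun_eq_iff)
  ultimately show ?thesis by simp
qed

lemma carrier_sum_delta:
  assumes "F \<subseteq> E"
  shows "(\<Sum>e\<in>F. scal (s e) (delta (Inr e))) \<in> graph_lie_carrier V E"
  unfolding graph_lie_carrier_def
proof (intro CollectI allI impI)
  fix i :: "'a + 'a set" assume i: "i \<notin> Inl ` V \<union> Inr ` E"
  have "(\<Sum>e\<in>F. scal (s e) (delta (Inr e))) i = (\<Sum>e\<in>F. s e * delta (Inr e) i)"
    by (simp add: sum_fun_apply)
  also have "\<dots> = 0"
  proof (rule sum.neutral, rule ballI)
    fix e assume "e \<in> F"
    then have "i \<noteq> Inr e" using i assms by blast
    then show "s e * delta (Inr e) i = 0" by (simp add: delta_def)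
  qed
  finally show "(\<Sum>e\<in>F. scal (s e) (delta (Inr e))) i = 0" .
qed

lemma lin_sum:
  assumes l: "lin_functional (graph_lie_carrier V E) l" and F: "finite F" "F \<subseteq> E"
  shows "l (\<Sum>e\<in>F. scal (s e) (delta (Inr e))) = (\<Sum>e\<in>F. s e * l (delta (Inr e)))"
  using F
proof (induction F rule: finite_induct)
  case empty
  show ?case by (simp only: sum.empty lin_zero[OF l])
next
  case (insert e F)
  have c1: "scal (s e) (delta (Inr e)) \<in> graph_lie_carrier V E"
    using carrier_sum_delta[of "{e}" E s V] insert.prems by simp
  have c2: "(\<Sum>e\<in>F. scal (s e) (delta (Inr e))) \<in> graph_lie_carrier V E"
    using carrier_sum_delta[of F E s V] insert.prems by simp
  have c3: "delta (Inr e) \<in> graph_lie_carrier V E" using insert.prems by (intro delta_carrier) auto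
  have "l (\<Sum>e\<in>insert e F. scal (s e) (delta (Inr e))) = l (scal (s e) (delta (Inr e)) + (\<Sum>e\<in>F. scal (s e) (delta (Inr e))))"
    using insert by simp
  also have "\<dots> = l (scal (s e) (delta (Inr e))) + l (\<Sum>e\<in>F. scal (s e) (delta (Inr e)))"
    using linD1[OF l c1 c2] .
  also have "l (scal (s e) (delta (Inr e))) = s e * l (delta (Inr e))"
    using linD2[OF l c3] .
  finally show ?case using insert by simp
qed

lemma form_identity:
  fixes x y :: "('v::linorder + 'v set) \<Rightarrow> 'k::field"
  assumes s: "simple_graph V E"
  shows "(\<Sum>e\<in>E. c e * (x (Inl (Min e)) * y (Inl (Max e)) - x (Inl (Max e)) * y (Inl (Min e))))
       = (\<Sum>a\<in>V. x (Inl a) * (\<Sum>b\<in>V. cA E c a b * y (Inl b)))"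
proof -
  define f where "f p = x (Inl (fst p)) * cA E c (fst p) (snd p) * y (Inl (snd p))" for p
  define Q1 where "Q1 = {p \<in> V \<times> V. fst p < snd p \<and> {fst p, snd p} \<in> E}"
  define Q2 where "Q2 = {p \<in> V \<times> V. snd p < fst p \<and> {fst p, snd p} \<in> E}"
  have fV: "finite V" using s unfolding simple_graph_def by simp
  have fVV: "finite (V \<times> V)" using fV by simp
  have Q12: "Q1 \<subseteq> V \<times> V" "Q2 \<subseteq> V \<times> V" unfolding Q1_def Q2_def by auto
  have fQ: "finite Q1" "finite Q2" using Q12 fVV finite_subset by blast+
  have "(\<Sum>a\<in>V. x (Inl a) * (\<Sum>b\<in>V. cA E c a b * y (Inl b))) = (\<Sum>a\<in>V. \<Sum>b\<in>V. f (a, b))"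
    by (simp add: sum_distrib_left f_def mult.assoc)
  also have "\<dots> = (\<Sum>p\<in>V \<times> V. f p)" by (simp add: sum.cartesian_product)
  also have "\<dots> = (\<Sum>p\<in>Q1 \<union> Q2. f p)"
  proof (rule sum.mono_neutral_right[OF fVV])
    show "Q1 \<union> Q2 \<subseteq> V \<times> V" using Q12 by blast
    show "\<forall>p\<in>V \<times> V - (Q1 \<union> Q2). f p = 0"
    proof
      fix p assume p: "p \<in> V \<times> V - (Q1 \<union> Q2)"
      have "{fst p, snd p} \<notin> E"
      proof
        assume e: "{fst p, snd p} \<in> E"
        then have "fst p \<noteq> snd p" using sg_dbl[OF s e] unfolding dbl_def
          by (metis doubleton_eq_iff insert_absorb2)
        then have "fst p < snd p \<or> snd p < fst p" by auto
        then show False using p e unfolding Q1_def Q2_def by auto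
      qed
      then show "f p = 0" by (simp add: f_def cA_def)
    qed
  qed
  also have "\<dots> = (\<Sum>p\<in>Q1. f p) + (\<Sum>p\<in>Q2. f p)"
    by (rule sum.union_disjoint) (use fQ in \<open>auto simp: Q1_def Q2_def\<close>)
  finally have R: "(\<Sum>a\<in>V. x (Inl a) * (\<Sum>b\<in>V. cA E c a b * y (Inl b))) = (\<Sum>p\<in>Q1. f p) + (\<Sum>p\<in>Q2. f p)" .
  define h where "h p = {fst p, snd p}" for p :: "'v \<times> 'v"
  have inj: "inj_on h Q1"
  proof (rule inj_onI)
    fix p q assume p: "p \<in> Q1" and q: "q \<in> Q1" and hpq: "h p = h q"
    have "fst p < snd p" "fst q < snd q" using p q Q1_def by auto
    then show "p = q" using hpq unfolding h_def
      by (metis doubleton_eq_iff order_less_asym prod.expand)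
  qed
  have img: "E = h ` Q1"
  proof
    show "E \<subseteq> h ` Q1"
    proof
      fix e assume e: "e \<in> E"
      obtain a b where ab: "a \<noteq> b" "e = {a, b}" using sg_dbl[OF s e] unfolding dbl_def by blast
      have abV: "a \<in> V" "b \<in> V" using sg_sub[OF s e] ab by auto
      show "e \<in> h ` Q1"
      proof (cases "a < b")
        case True
        then have "(a, b) \<in> Q1" using abV e ab unfolding Q1_def by auto
        then show ?thesis by (rule image_eqI[rotated]) (simp add: h_def ab)
      next
        case False
        then have "b < a" using ab by auto
        then have "(b, a) \<in> Q1" using abV e ab unfolding Q1_def by (auto simp: insert_commute)
        then show ?thesis by (rule image_eqI[rotated]) (simp add: h_def ab insert_commute)
      qed
    qed
    show "h ` Q1 \<subseteq> E" unfolding h_def Q1_def by auto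
  qed
  have "(\<Sum>e\<in>E. c e * (x (Inl (Min e)) * y (Inl (Max e)) - x (Inl (Max e)) * y (Inl (Min e))))
      = (\<Sum>p\<in>Q1. c (h p) * (x (Inl (Min (h p))) * y (Inl (Max (h p))) - x (Inl (Max (h p))) * y (Inl (Min (h p)))))"
    unfolding img using sum.reindex[OF inj] by simp
  also have "\<dots> = (\<Sum>p\<in>Q1. f p + f (prod.swap p))"
  proof (rule sum.cong[OF refl])
    fix p assume p: "p \<in> Q1"
    obtain a b where pab: "p = (a, b)" by (cases p)
    have ab: "a < b" "{a, b} \<in> E" using p pab Q1_def by auto
    have mm: "Min {a, b} = a" "Max {a, b} = b" using ab(1) by auto
    have "cA E c a b = c {a, b}" "cA E c b a = - c {a, b}"
      using ab by (auto simp: cA_def insert_commute)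
    then show "c (h p) * (x (Inl (Min (h p))) * y (Inl (Max (h p))) - x (Inl (Max (h p))) * y (Inl (Min (h p))))
      = f p + f (prod.swap p)"
      unfolding pab h_def f_def using mm by (simp add: algebra_simps)
  qed
  also have "\<dots> = (\<Sum>p\<in>Q1. f p) + (\<Sum>p\<in>Q1. f (prod.swap p))" by (simp add: sum.distrib)
  also have "(\<Sum>p\<in>Q1. f (prod.swap p)) = (\<Sum>p\<in>Q2. f p)"
  proof -
    have "Q2 = prod.swap ` Q1" unfolding Q1_def Q2_def by (auto simp: insert_commute image_iff)
    moreover have "inj_on prod.swap Q1" by (rule inj_onI) (metis swap_swap)
    ultimately show ?thesis by (simp add: sum.reindex)
  qed
  finally show ?thesis using R by simp
qed

lemma l_bracket:
  fixes l :: "(('v::linorder + 'v set) \<Rightarrow> 'k::field) \<Rightarrow> 'k"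
  assumes s: "simple_graph V E" and l: "lin_functional (graph_lie_carrier V E) l"
  shows "l (graph_lie_bracket V E x y) = (\<Sum>a\<in>V. x (Inl a) * (\<Sum>b\<in>V. cA E (\<lambda>e. l (delta (Inr e))) a b * y (Inl b)))"
proof -
  have fE: "finite E" using sg_finE[OF s] .
  have "l (graph_lie_bracket V E x y) = (\<Sum>e\<in>E. (x (Inl (Min e)) * y (Inl (Max e)) - x (Inl (Max e)) * y (Inl (Min e))) * l (delta (Inr e)))"
    unfolding bracket_sum[OF fE] by (rule lin_sum[OF l fE subset_refl])
  also have "\<dots> = (\<Sum>e\<in>E. l (delta (Inr e)) * (x (Inl (Min e)) * y (Inl (Max e)) - x (Inl (Max e)) * y (Inl (Min e))))"
    by (simp add: mult.commute)
  also have "\<dots> = (\<Sum>a\<in>V. x (Inl a) * (\<Sum>b\<in>V. cA E (\<lambda>e. l (delta (Inr e))) a b * y (Inl b)))"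
    by (rule form_identity[OF s])
  finally show ?thesis .
qed

lemma stab_char:
  fixes l :: "(('v::linorder + 'v set) \<Rightarrow> 'k::field) \<Rightarrow> 'k"
  assumes s: "simple_graph V E" and l: "lin_functional (graph_lie_carrier V E) l"
  shows "stabilizer V E l = KERF V E (cA E (\<lambda>e. l (delta (Inr e))))"
proof -
  define A where "A = cA E (\<lambda>e. l (delta (Inr e)))"
  have lb: "l (graph_lie_bracket V E x y) = (\<Sum>a\<in>V. x (Inl a) * (\<Sum>b\<in>V. A a b * y (Inl b)))" for x y
    unfolding A_def by (rule l_bracket[OF s l])
  have fV: "finite V" using s unfolding simple_graph_def by simp
  show ?thesis unfolding A_def[symmetric]
  proof
    show "stabilizer V E l \<subseteq> KERF V E A"
    proof
      fix y assume y: "y \<in> stabilizer V E l"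
      have yc: "y \<in> graph_lie_carrier V E" using y stabilizer_def by blast
      have "\<forall>a\<in>V. (\<Sum>b\<in>V. A a b * y (Inl b)) = 0"
      proof
        fix a assume a: "a \<in> V"
        have dc: "delta (Inl a) \<in> graph_lie_carrier V E" using a by (intro delta_carrier) auto
        have "0 = l (graph_lie_bracket V E (delta (Inl a)) y)" using y dc unfolding stabilizer_def by auto
        also have "\<dots> = (\<Sum>a'\<in>V. (if a' = a then 1 else 0) * (\<Sum>b\<in>V. A a' b * y (Inl b)))"
          unfolding lb by (simp add: delta_def)
        also have "\<dots> = (\<Sum>a'\<in>V. if a' = a then (\<Sum>b\<in>V. A a' b * y (Inl b)) else 0)"
          by (rule sum.cong) auto
        also have "\<dots> = (\<Sum>b\<in>V. A a b * y (Inl b))" using a fV by (simp add: sum.delta')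
        finally show "(\<Sum>b\<in>V. A a b * y (Inl b)) = 0" by simp
      qed
      then show "y \<in> KERF V E A" using yc unfolding KERF_def graph_lie_carrier_def by blast
    qed
    show "KERF V E A \<subseteq> stabilizer V E l"
    proof
      fix y assume y: "y \<in> KERF V E A"
      then have yc: "y \<in> graph_lie_carrier V E" unfolding KERF_def graph_lie_carrier_def by blast
      have "\<forall>x \<in> graph_lie_carrier V E. l (graph_lie_bracket V E x y) = 0"
        using y unfolding lb KERF_def by simp
      then show "y \<in> stabilizer V E l" using yc unfolding stabilizer_def by blast
    qed
  qed
qed



lemma sg_neq: "simple_graph V E \<Longrightarrow> {a, b} \<in> E \<Longrightarrow> a \<noteq> b"
proof
  assume s: "simple_graph V E" and e: "{a, b} \<in> E" and ab: "a = b"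
  obtain c d where "c \<noteq> d" "{a, b} = {c, d}" using sg_dbl[OF s e] unfolding dbl_def by blast
  then show False using ab by (metis doubleton_eq_iff)
qed

lemma KERF_subspace: "VS.subspace (KERF V W A :: (('v + 'w) \<Rightarrow> 'k::field) set)"
proof -
  have 1: "(\<Sum>b\<in>V. A a b * scal c y (Inl b)) = c * (\<Sum>b\<in>V. A a b * y (Inl b))" for a c and y :: "('v + 'w) \<Rightarrow> 'k"
    by (simp add: sum_distrib_left mult.left_commute)
  have 2: "(\<Sum>b\<in>V. A a b * (y + z) (Inl b)) = (\<Sum>b\<in>V. A a b * y (Inl b)) + (\<Sum>b\<in>V. A a b * z (Inl b))"
    for a and y z :: "('v + 'w) \<Rightarrow> 'k"
    by (simp add: sum.distrib distrib_left)
  show ?thesis unfolding VS.subspace_def KERF_def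
    by (intro conjI ballI allI; simp only: mem_Collect_eq 1 2) auto
qed

lemma KERF_span:
  assumes "finite V" "finite W"
  shows "KERF V W A \<subseteq> VS.span (delta ` (Inl ` V \<union> Inr ` W) :: (('v + 'w) \<Rightarrow> 'k::field) set)"
  using coord_span[of "Inl ` V \<union> Inr ` W"] assms unfolding KERF_def by blast

lemma comp_facts:
  assumes s: "simple_graph V E"
    and H: "\<forall>v\<in>V. \<exists>N. matching E N \<and> card N = matching_number E \<and> v \<notin> \<Union>N"
    and mM: "matching E M" and cM: "card M = matching_number E"
    and x: "x \<in> V" "x \<notin> \<Union>M"
  defines "C \<equiv> {y. (x, y) \<in> (adj E)\<^sup>*}"
  shows "C \<subseteq> V" "x \<in> C" "\<And>y z. y \<in> C \<Longrightarrow> {y, z} \<in> E \<Longrightarrow> z \<in> C"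
    "\<And>y. y \<in> C \<Longrightarrow> y \<notin> \<Union>M \<Longrightarrow> y = x"
    "\<And>x'. x' \<in> V \<Longrightarrow> x' \<notin> \<Union>M \<Longrightarrow> x' \<noteq> x \<Longrightarrow> C \<inter> {y. (x', y) \<in> (adj E)\<^sup>*} = {}"
    "odd (card C)"
proof -
  show CV: "C \<subseteq> V"
  proof
    fix y assume "y \<in> C"
    then have "(x, y) \<in> (adj E)\<^sup>*" unfolding C_def by simp
    then show "y \<in> V"
    proof (induction rule: rtrancl_induct)
      case base then show ?case using x by simp
    next
      case (step y z)
      then have "{y, z} \<in> E" unfolding adj_def by simp
      then show ?case using sg_sub[OF s] by blast
    qed
  qed
  show xC: "x \<in> C" unfolding C_def by simp
  show cl: "\<And>y z. y \<in> C \<Longrightarrow> {y, z} \<in> E \<Longrightarrow> z \<in> C"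
  proof -
    fix y z assume "y \<in> C" "{y, z} \<in> E"
    then have "(x, y) \<in> (adj E)\<^sup>*" "(y, z) \<in> adj E" unfolding C_def adj_def by auto
    then show "z \<in> C" unfolding C_def by (simp add: rtrancl_into_rtrancl)
  qed
  show uniq: "\<And>y. y \<in> C \<Longrightarrow> y \<notin> \<Union>M \<Longrightarrow> y = x"
  proof (rule ccontr)
    fix y assume y: "y \<in> C" "y \<notin> \<Union>M" "y \<noteq> x"
    then obtain n where "(x, y) \<in> adj E ^^ n" unfolding C_def using rtrancl_power by blast
    then show False using gallai[OF s H mM cM x(2) y(2)] y(3) by metis
  qed
  have symA: "sym (adj E)" unfolding sym_def adj_def by (simp add: insert_commute)
  show "\<And>x'. x' \<in> V \<Longrightarrow> x' \<notin> \<Union>M \<Longrightarrow> x' \<noteq> x \<Longrightarrow> C \<inter> {y. (x', y) \<in> (adj E)\<^sup>*} = {}"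
  proof -
    fix x' assume x': "x' \<in> V" "x' \<notin> \<Union>M" "x' \<noteq> x"
    show "C \<inter> {y. (x', y) \<in> (adj E)\<^sup>*} = {}"
    proof (rule ccontr)
      assume "C \<inter> {y. (x', y) \<in> (adj E)\<^sup>*} \<noteq> {}"
      then obtain z where z: "(x, z) \<in> (adj E)\<^sup>*" "(x', z) \<in> (adj E)\<^sup>*" unfolding C_def by blast
      have "(z, x') \<in> (adj E)\<^sup>*" using z(2) symA by (meson sym_rtrancl symD)
      then have "(x, x') \<in> (adj E)\<^sup>*" using z(1) by simp
      then obtain n where "(x, x') \<in> adj E ^^ n" using rtrancl_power by blast
      then show False using gallai[OF s H mM cM x(2) x'(2)] x'(3) by metis
    qed
  qed
  define Mx where "Mx = {e \<in> M. e \<subseteq> C}"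
  have MxM: "Mx \<subseteq> M" unfolding Mx_def by blast
  have mMx: "matching E Mx" using mM MxM pw_subset[of M Mx] unfolding matching_iff by blast
  have eq: "C - {x} = \<Union>Mx"
  proof
    show "C - {x} \<subseteq> \<Union>Mx"
    proof
      fix y assume y: "y \<in> C - {x}"
      then have "y \<in> \<Union>M" using uniq by blast
      then obtain e where e: "e \<in> M" "y \<in> e" by blast
      have eE: "e \<in> E" using e mM unfolding matching_iff by blast
      obtain z where z: "z \<noteq> y" "e = {y, z}" using dbl_other[OF sg_dbl[OF s eE] e(2)] by blast
      have "z \<in> C" using cl[of y z] y eE z by blast
      then have "e \<subseteq> C" using z y by blast
      then show "y \<in> \<Union>Mx" using e Mx_def by blast
    qed
    show "\<Union>Mx \<subseteq> C - {x}" using x(2) unfolding Mx_def by blast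
  qed
  have "finite V" using s unfolding simple_graph_def by simp
  then have fC: "finite C" using finite_subset[OF CV] by blast
  have "card C = card (C - {x}) + 1" using fC xC by (metis card_Suc_Diff1 Suc_eq_plus1)
  also have "\<dots> = 2 * card Mx + 1" unfolding eq card_Union_matching[OF s mMx] ..
  finally show "odd (card C)" by simp
qed

lemma core:
  fixes A :: "'v \<Rightarrow> 'v \<Rightarrow> 'k::field" and W :: "'w set"
  assumes "simple_graph V E" "finite W"
    "\<forall>a\<in>V. \<forall>b\<in>V. A b a = - A a b" "\<forall>a\<in>V. \<forall>b\<in>V. A a b \<noteq> 0 \<longrightarrow> {a, b} \<in> E"
  shows "card V + card W \<le> VS.dim (KERF V W A :: (('v + 'w) \<Rightarrow> 'k) set) + 2 * matching_number E"
  using assms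
proof (induction "card V" arbitrary: V E rule: less_induct)
  case less
  note s = less.prems(1) and fW = less.prems(2) and sk = less.prems(3) and sup = less.prems(4)
  have fV: "finite V" using s unfolding simple_graph_def by simp
  have spanV: "KERF V W A \<subseteq> VS.span (delta ` (Inl ` V \<union> Inr ` W) :: (('v + 'w) \<Rightarrow> 'k) set)"
    using KERF_span[OF fV fW] .
  have finD: "finite (delta ` (Inl ` V \<union> Inr ` W) :: (('v + 'w) \<Rightarrow> 'k) set)" using fV fW by simp
  show ?case
  proof (cases "\<exists>v\<in>V. \<forall>N. matching E N \<and> card N = matching_number E \<longrightarrow> v \<in> \<Union>N")
    case True
    then obtain v where v: "v \<in> V" and cov: "\<forall>N. matching E N \<and> card N = matching_number E \<longrightarrow> v \<in> \<Union>N"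
      by blast
    define V' where "V' = V - {v}"
    define E' where "E' = {e \<in> E. v \<notin> e}"
    have s': "simple_graph V' E'" using s unfolding simple_graph_def V'_def E'_def by blast
    have lt: "card V' < card V" using fV v V'_def by (metis card_Diff1_less)
    have sk': "\<forall>a\<in>V'. \<forall>b\<in>V'. A b a = - A a b" using sk V'_def by blast
    have sup': "\<forall>a\<in>V'. \<forall>b\<in>V'. A a b \<noteq> 0 \<longrightarrow> {a, b} \<in> E'" using sup V'_def E'_def by blast
    have IH: "card V' + card W \<le> VS.dim (KERF V' W A :: (('v + 'w) \<Rightarrow> 'k) set) + 2 * matching_number E'"
      using less.hyps[OF lt s' fW sk' sup'] .
    have nu: "matching_number E' + 1 \<le> matching_number E"
    proof -
      obtain M' where M': "matching E' M'" "card M' = matching_number E'" using nu_ex[OF s'] by blast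
      have mE: "matching E M'" using M'(1) unfolding matching_iff E'_def by blast
      have "v \<notin> \<Union>M'" using M'(1) unfolding matching_iff E'_def by blast
      then have "card M' \<noteq> matching_number E" using cov mE by blast
      moreover have "card M' \<le> matching_number E" using nu_ge[OF s mE] .
      ultimately show ?thesis using M'(2) by simp
    qed
    define \<phi> where "\<phi> y = (\<Sum>b\<in>V. A v b * y (Inl b))" for y :: "('v + 'w) \<Rightarrow> 'k"
    have fV': "finite V'" using fV V'_def by simp
    have h: "VS.dim (KERF V' W A :: (('v + 'w) \<Rightarrow> 'k) set) \<le> VS.dim {y \<in> KERF V' W A. \<phi> y = 0} + 1"
    proof (rule dim_hyperplane[OF KERF_subspace KERF_span[OF fV' fW]])
      show "finite (delta ` (Inl ` V' \<union> Inr ` W) :: (('v + 'w) \<Rightarrow> 'k) set)" using fV' fW by simp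
      show "\<phi> (x + y) = \<phi> x + \<phi> y" for x y unfolding \<phi>_def by (simp add: sum.distrib distrib_left)
      show "\<phi> (scal c x) = c * \<phi> x" for c x unfolding \<phi>_def by (simp add: sum_distrib_left mult.left_commute)
    qed
    have sub: "{y \<in> KERF V' W A. \<phi> y = 0} \<subseteq> KERF V W A"
    proof
      fix y :: "('v + 'w) \<Rightarrow> 'k" assume y: "y \<in> {y \<in> KERF V' W A. \<phi> y = 0}"
      have supp: "\<forall>i. i \<notin> Inl ` V' \<union> Inr ` W \<longrightarrow> y i = 0" using y unfolding KERF_def by blast
      have yv: "y (Inl v) = 0" using supp V'_def by blast
      have sp: "\<forall>i. i \<notin> Inl ` V \<union> Inr ` W \<longrightarrow> y i = 0" using supp V'_def by blast
      have split: "(\<Sum>b\<in>V. A a b * y (Inl b)) = (\<Sum>b\<in>V'. A a b * y (Inl b))" for a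
      proof -
        have "(\<Sum>b\<in>V. A a b * y (Inl b)) = A a v * y (Inl v) + (\<Sum>b\<in>V'. A a b * y (Inl b))"
          unfolding V'_def using fV v by (simp add: sum.remove)
        then show ?thesis using yv by simp
      qed
      have "\<forall>a\<in>V. (\<Sum>b\<in>V. A a b * y (Inl b)) = 0"
      proof
        fix a assume a: "a \<in> V"
        show "(\<Sum>b\<in>V. A a b * y (Inl b)) = 0"
        proof (cases "a = v")
          case True
          then show ?thesis using y unfolding \<phi>_def by simp
        next
          case False
          then have "a \<in> V'" using a V'_def by blast
          then show ?thesis unfolding split using y unfolding KERF_def by blast
        qed
      qed
      then show "y \<in> KERF V W A" using sp unfolding KERF_def by blast
    qed
    have m: "VS.dim {y \<in> KERF V' W A. \<phi> y = 0} \<le> VS.dim (KERF V W A :: (('v + 'w) \<Rightarrow> 'k) set)"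
      by (rule dim_mono_fin[OF sub spanV finD])
    have "card V = card V' + 1" using fV v V'_def by (metis card_Suc_Diff1 Suc_eq_plus1)
    then show ?thesis using IH nu h m by linarith
  next
    case False
    then have H: "\<forall>v\<in>V. \<exists>N. matching E N \<and> card N = matching_number E \<and> v \<notin> \<Union>N" by blast
    obtain M where mM: "matching E M" and cM: "card M = matching_number E" using nu_ex[OF s] by blast
    define X where "X = V - \<Union>M"
    define C where "C x = {y. (x, y) \<in> (adj E)\<^sup>*}" for x
    have XV: "x \<in> V" "x \<notin> \<Union>M" if "x \<in> X" for x using that X_def by auto
    note cf = comp_facts[OF s H mM cM, folded C_def]
    have CV: "C x \<subseteq> V" if "x \<in> X" for x using cf(1)[OF XV[OF that]] .
    have xC: "x \<in> C x" for x unfolding C_def by simp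
    have cl: "z \<in> C x" if "x \<in> X" "y \<in> C x" "{y, z} \<in> E" for x y z using cf(3)[OF XV[OF that(1)] that(2,3)] .
    have disj: "C x \<inter> C x' = {}" if "x \<in> X" "x' \<in> X" "x' \<noteq> x" for x x'
      using cf(5)[OF XV[OF that(1)] XV[OF that(2)] that(3)] unfolding C_def .
    have oddC: "odd (card (C x))" if "x \<in> X" for x using cf(6)[OF XV[OF that]] .
    have diag: "A a a = 0" if "a \<in> V" for a
    proof (rule ccontr)
      assume "A a a \<noteq> 0"
      then have "{a, a} \<in> E" using sup that by blast
      then show False using sg_neq[OF s] by blast
    qed
    have ex: "\<forall>x\<in>X. \<exists>z::'v \<Rightarrow> 'k. (\<forall>b. b \<notin> C x \<longrightarrow> z b = 0) \<and> (\<exists>b\<in>C x. z b \<noteq> 0)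
        \<and> (\<forall>a\<in>C x. (\<Sum>b\<in>C x. A a b * z b) = 0)"
    proof
      fix x assume x: "x \<in> X"
      have fC: "finite (C x)" using finite_subset[OF CV[OF x] fV] .
      show "\<exists>z::'v \<Rightarrow> 'k. (\<forall>b. b \<notin> C x \<longrightarrow> z b = 0) \<and> (\<exists>b\<in>C x. z b \<noteq> 0)
        \<and> (\<forall>a\<in>C x. (\<Sum>b\<in>C x. A a b * z b) = 0)"
        by (rule odd_kernel[OF fC oddC[OF x]]) (use CV[OF x] diag sk in blast)+
    qed
    obtain zf where zf: "\<forall>x\<in>X. (\<forall>b. b \<notin> C x \<longrightarrow> zf x b = 0) \<and> (\<exists>b\<in>C x. zf x b \<noteq> 0)
        \<and> (\<forall>a\<in>C x. (\<Sum>b\<in>C x. A a b * zf x b) = 0)"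
      using bchoice[OF ex] by blast
    have pex: "\<forall>x\<in>X. \<exists>p. p \<in> C x \<and> zf x p \<noteq> 0" using zf by blast
    obtain pf where pf: "\<forall>x\<in>X. pf x \<in> C x \<and> zf x (pf x) \<noteq> 0" using bchoice[OF pex] by blast
    define we where "we x = ((\<lambda>i. case i of Inl b \<Rightarrow> zf x b | Inr _ \<Rightarrow> 0) :: ('v + 'w) \<Rightarrow> 'k)" for x
    define dl where "dl w = (delta (Inr w) :: ('v + 'w) \<Rightarrow> 'k)" for w
    define F where "F = we ` X \<union> dl ` W"
    have fX: "finite X" using fV X_def by simp
    have zout: "zf x' (pf x) = 0" if "x \<in> X" "x' \<in> X" "x' \<noteq> x" for x x'
    proof -
      have "pf x \<notin> C x'" using disj[OF that] pf that(1) by blast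
      then show ?thesis using zf that(2) by blast
    qed
    have weK: "we x \<in> KERF V W A" if x: "x \<in> X" for x
    proof -
      have supp: "\<forall>i. i \<notin> Inl ` V \<union> Inr ` W \<longrightarrow> we x i = 0"
      proof (intro allI impI)
        fix i :: "'v + 'w" assume i: "i \<notin> Inl ` V \<union> Inr ` W"
        show "we x i = 0"
        proof (cases i)
          case (Inl b)
          then have "b \<notin> C x" using i CV[OF x] by blast
          then show ?thesis using zf x Inl unfolding we_def by simp
        next
          case (Inr w) then show ?thesis unfolding we_def by simp
        qed
      qed
      have "\<forall>a\<in>V. (\<Sum>b\<in>V. A a b * we x (Inl b)) = 0"
      proof
        fix a assume a: "a \<in> V"
        have "(\<Sum>b\<in>V. A a b * we x (Inl b)) = (\<Sum>b\<in>V. A a b * zf x b)" by (simp add: we_def)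
        also have "\<dots> = (\<Sum>b\<in>C x. A a b * zf x b)"
          by (rule sum.mono_neutral_right[OF fV CV[OF x]]) (use zf x in auto)
        also have "\<dots> = 0"
        proof (cases "a \<in> C x")
          case True
          then show ?thesis using zf x by blast
        next
          case False
          show ?thesis
          proof (rule sum.neutral, rule ballI)
            fix b assume b: "b \<in> C x"
            have "A a b = 0"
            proof (rule ccontr)
              assume "A a b \<noteq> 0"
              then have "{a, b} \<in> E" using sup a CV[OF x] b by blast
              then have "{b, a} \<in> E" by (simp add: insert_commute)
              then show False using cl[OF x b] False by blast
            qed
            then show "A a b * zf x b = 0" by simp
          qed
        qed
        finally show "(\<Sum>b\<in>V. A a b * we x (Inl b)) = 0" .
      qed
      then show ?thesis using supp unfolding KERF_def by blast
    qed
    have dlK: "dl w \<in> KERF V W A" if "w \<in> W" for w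
      using that unfolding KERF_def dl_def delta_def by auto
    have FK: "F \<subseteq> KERF V W A" unfolding F_def using weK dlK by blast
    have fF: "finite F" unfolding F_def using fX fW by simp
    have ind: "VS.independent F"
    proof (rule disj_indep[OF fF])
      fix f assume f: "f \<in> F"
      show "\<exists>p. f p \<noteq> 0 \<and> (\<forall>g\<in>F. g \<noteq> f \<longrightarrow> g p = 0)"
      proof (cases "f \<in> we ` X")
        case True
        then obtain x where x: "x \<in> X" "f = we x" by blast
        show ?thesis
        proof (rule exI[of _ "Inl (pf x)"], intro conjI ballI impI)
          show "f (Inl (pf x)) \<noteq> 0" using x pf unfolding we_def by simp
          fix g assume g: "g \<in> F" "g \<noteq> f"
          show "g (Inl (pf x)) = 0"
          proof (cases "g \<in> we ` X")
            case True
            then obtain x' where x': "x' \<in> X" "g = we x'" by blast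
            then have "x' \<noteq> x" using g x by blast
            then show ?thesis using zout[OF x(1) x'(1)] x' unfolding we_def by simp
          next
            case False
            then show ?thesis using g unfolding F_def dl_def delta_def by auto
          qed
        qed
      next
        case False
        then obtain w where w: "w \<in> W" "f = dl w" using f unfolding F_def by blast
        show ?thesis
        proof (rule exI[of _ "Inr w"], intro conjI ballI impI)
          show "f (Inr w) \<noteq> 0" using w unfolding dl_def delta_def by simp
          fix g assume g: "g \<in> F" "g \<noteq> f"
          show "g (Inr w) = 0"
          proof (cases "g \<in> we ` X")
            case True
            then show ?thesis unfolding we_def by auto
          next
            case False
            then obtain w' where "w' \<in> W" "g = dl w'" using g unfolding F_def by blast
            then show ?thesis using g w unfolding dl_def delta_def by auto
          qed
        qed
      qed
    qed
    have cardF: "card F = card X + card W"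
    proof -
      have inj1: "inj_on we X"
      proof (rule inj_onI)
        fix x x' assume x: "x \<in> X" and x': "x' \<in> X" and e: "we x = we x'"
        show "x = x'"
        proof (rule ccontr)
          assume "x \<noteq> x'"
          then have "zf x' (pf x) = 0" using zout[OF x x'] by blast
          moreover have "zf x (pf x) \<noteq> 0" using pf x by blast
          moreover have "we x (Inl (pf x)) = we x' (Inl (pf x))" using e by simp
          ultimately show False unfolding we_def by simp
        qed
      qed
      have inj2: "inj_on dl W"
      proof (rule inj_onI)
        fix w w' assume "dl w = dl w'"
        then have "dl w (Inr w) = dl w' (Inr w)" by simp
        then show "w = w'" unfolding dl_def delta_def by (auto split: if_splits)
      qed
      have dj: "we ` X \<inter> dl ` W = {}"
      proof (rule ccontr)
        assume "we ` X \<inter> dl ` W \<noteq> {}"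
        then obtain x w where "we x = dl w" by blast
        then have "we x (Inr w) = dl w (Inr w)" by simp
        then show False unfolding we_def dl_def delta_def by simp
      qed
      have "card F = card (we ` X) + card (dl ` W)"
        unfolding F_def using fX fW dj by (simp add: card_Un_disjoint)
      then show ?thesis using card_image[OF inj1] card_image[OF inj2] by simp
    qed
    have le: "card F \<le> VS.dim (KERF V W A :: (('v + 'w) \<Rightarrow> 'k) set)"
      using indep_card_le_dim[OF ind FK spanV finD] by blast
    have UV: "\<Union>M \<subseteq> V" using mM sg_sub[OF s] unfolding matching_iff by blast
    have cU: "card (\<Union>M) = 2 * matching_number E" using card_Union_matching[OF s mM] cM by simp
    have "card X = card V - card (\<Union>M)" unfolding X_def using UV fV
      by (meson card_Diff_subset finite_subset)
    moreover have "card (\<Union>M) \<le> card V" using UV fV card_mono by blast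
    ultimately show ?thesis using cardF le cU by linarith
  qed
qed



lemma cA_skew:
  assumes s: "simple_graph V E"
  shows "\<forall>a\<in>V. \<forall>b\<in>V. cA E c b a = - cA E c a b"
proof (intro ballI)
  fix a b assume "a \<in> V" "b \<in> V"
  show "cA E c b a = - cA E c a b"
  proof (cases "{a, b} \<in> E")
    case True
    then have "a \<noteq> b" using sg_neq[OF s] by blast
    then show ?thesis using True unfolding cA_def by (auto simp: insert_commute)
  next
    case False
    then show ?thesis unfolding cA_def by (auto simp: insert_commute)
  qed
qed

lemma cA_supp: "\<forall>a\<in>V. \<forall>b\<in>V. cA E c a b \<noteq> 0 \<longrightarrow> {a, b} \<in> E"
  unfolding cA_def by auto

lemma match_kernel:
  fixes y :: "('v::linorder + 'w) \<Rightarrow> 'k::field"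
  assumes s: "simple_graph V E" and m: "matching E M"
  shows "(\<forall>a\<in>V. (\<Sum>b\<in>V. cA E (\<lambda>e. if e \<in> M then 1 else 0) a b * y (Inl b)) = 0) \<longleftrightarrow> (\<forall>p\<in>\<Union>M. y (Inl p) = 0)"
proof
  have fV: "finite V" using s unfolding simple_graph_def by simp
  have ME: "M \<subseteq> E" and pM: "pw M" using m unfolding matching_iff by auto
  assume H: "\<forall>a\<in>V. (\<Sum>b\<in>V. cA E (\<lambda>e. if e \<in> M then 1 else 0) a b * y (Inl b)) = 0"
  show "\<forall>p\<in>\<Union>M. y (Inl p) = 0"
  proof
    fix p assume "p \<in> \<Union>M"
    then obtain e where e: "e \<in> M" "p \<in> e" by blast
    obtain a where a: "a \<noteq> p" "e = {p, a}" using dbl_other[OF sg_dbl[OF s] e(2)] e ME by blast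
    have eE: "{a, p} \<in> E" "{a, p} \<in> M" using e a ME by (auto simp: insert_commute)
    have aV: "a \<in> V" "p \<in> V" using sg_sub[OF s eE(1)] by auto
    have other: "cA E (\<lambda>e. if e \<in> M then 1 else 0) a b = (0::'k)" if "b \<noteq> p" for b
    proof (rule ccontr)
      assume "cA E (\<lambda>e. if e \<in> M then 1 else 0) a b \<noteq> (0::'k)"
      then have "{a, b} \<in> M" unfolding cA_def by (auto split: if_splits)
      then have "{a, b} = {a, p}" using pw_UnionD[OF pM _ eE(2), of "{a, b}" a] by simp
      then show False using that a(1) by (metis doubleton_eq_iff)
    qed
    have "0 = (\<Sum>b\<in>V. cA E (\<lambda>e. if e \<in> M then 1 else 0) a b * y (Inl b))" using H aV by simp
    also have "\<dots> = cA E (\<lambda>e. if e \<in> M then 1 else 0) a p * y (Inl p)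
        + (\<Sum>b\<in>V - {p}. cA E (\<lambda>e. if e \<in> M then 1 else 0) a b * y (Inl b))"
      by (rule sum.remove[OF fV aV(2)])
    also have "(\<Sum>b\<in>V - {p}. cA E (\<lambda>e. if e \<in> M then 1 else 0) a b * y (Inl b)) = 0"
      using other by (intro sum.neutral) auto
    finally have z: "cA E (\<lambda>e. if e \<in> M then 1 else 0) a p * y (Inl p) = 0" by simp
    have "cA E (\<lambda>e. if e \<in> M then 1 else (0::'k)) a p \<noteq> 0" using eE unfolding cA_def by auto
    then show "y (Inl p) = 0" using z by simp
  qed
next
  have ME: "M \<subseteq> E" using m unfolding matching_iff by auto
  assume H: "\<forall>p\<in>\<Union>M. y (Inl p) = 0"
  show "\<forall>a\<in>V. (\<Sum>b\<in>V. cA E (\<lambda>e. if e \<in> M then 1 else 0) a b * y (Inl b)) = 0"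
  proof (intro ballI sum.neutral)
    fix a b assume "b \<in> V"
    show "cA E (\<lambda>e. if e \<in> M then 1 else 0) a b * y (Inl b) = 0"
    proof (cases "{a, b} \<in> M")
      case True
      then have "b \<in> \<Union>M" by blast
      then have "y (Inl b) = 0" using H by blast
      then show ?thesis by simp
    next
      case False
      then show ?thesis unfolding cA_def by simp
    qed
  qed
qed

lemma card_sum_I:
  assumes "finite A" "finite B"
  shows "card (Inl ` A \<union> Inr ` B :: ('a + 'b) set) = card A + card B"
proof -
  have "card (Inl ` A \<union> Inr ` B :: ('a + 'b) set) = card (Inl ` A :: ('a + 'b) set) + card (Inr ` B :: ('a + 'b) set)"
    using assms by (intro card_Un_disjoint) auto
  also have "\<dots> = card A + card B" by (simp add: card_image)
  finally show ?thesis .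
qed

theorem proposition4p4:
  fixes V :: "'v::linorder set" and E :: "'v set set"
  assumes "simple_graph V E"
  shows "lie_index V E TYPE('k::field) = graph_lie_dim V E TYPE('k) - 2 * matching_number E
       \<and> graph_lie_dim V E TYPE('k) - 2 * matching_number E = card V + card E - 2 * matching_number E"
proof -
  note s = assms
  have fV: "finite V" using s unfolding simple_graph_def by simp
  have fE: "finite E" using sg_finE[OF s] .
  define I where "I = (Inl ` V \<union> Inr ` E :: ('v + 'v set) set)"
  have fI: "finite I" unfolding I_def using fV fE by simp
  have cI: "card I = card V + card E" unfolding I_def using card_sum_I[OF fV fE] .
  have gd: "graph_lie_dim V E TYPE('k) = card V + card E"
    unfolding graph_lie_dim_def graph_lie_carrier_def I_def[symmetric] cI[symmetric]
    by (rule coord_dim[OF fI])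
  obtain M where mM: "matching E M" and cM: "card M = matching_number E" using nu_ex[OF s] by blast
  have UV: "\<Union>M \<subseteq> V" using mM sg_sub[OF s] unfolding matching_iff by blast
  have cU: "card (\<Union>M) = 2 * matching_number E" using card_Union_matching[OF s mM] cM by simp
  have le2: "2 * matching_number E \<le> card V" using cU UV fV card_mono by metis
  define N where "N = card V + card E - 2 * matching_number E"
  define S where "S = {VS.dim (stabilizer V E l) | l :: (('v + 'v set) \<Rightarrow> 'k) \<Rightarrow> 'k.
                         lin_functional (graph_lie_carrier V E) l}"
  have li: "lie_index V E TYPE('k) = Min S" unfolding lie_index_def S_def ..
  have lower: "N \<le> y" if "y \<in> S" for y
  proof -
    obtain l :: "(('v + 'v set) \<Rightarrow> 'k) \<Rightarrow> 'k" where l: "lin_functional (graph_lie_carrier V E) l"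
      and y: "y = VS.dim (stabilizer V E l)" using \<open>y \<in> S\<close> unfolding S_def by blast
    have "card V + card E \<le> VS.dim (KERF V E (cA E (\<lambda>e. l (delta (Inr e)))) :: (('v + 'v set) \<Rightarrow> 'k) set)
        + 2 * matching_number E"
      by (rule core[OF s fE cA_skew[OF s] cA_supp])
    then show ?thesis unfolding y stab_char[OF s l] N_def by linarith
  qed
  have finS: "finite S"
  proof (rule finite_subset[of S "{..card (delta ` I :: (('v + 'v set) \<Rightarrow> 'k) set)}"])
    show "S \<subseteq> {..card (delta ` I :: (('v + 'v set) \<Rightarrow> 'k) set)}"
    proof
      fix y assume "y \<in> S"
      then obtain l :: "(('v + 'v set) \<Rightarrow> 'k) \<Rightarrow> 'k" where y: "y = VS.dim (stabilizer V E l)"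
        unfolding S_def by blast
      have "stabilizer V E l \<subseteq> VS.span (delta ` I)"
        using coord_span[OF fI] unfolding stabilizer_def graph_lie_carrier_def I_def by blast
      then have "VS.dim (stabilizer V E l) \<le> card (delta ` I :: (('v + 'v set) \<Rightarrow> 'k) set)"
        using VS.dim_le_card fI by blast
      then show "y \<in> {..card (delta ` I :: (('v + 'v set) \<Rightarrow> 'k) set)}" using y by simp
    qed
  qed simp
  define lM where "lM = (\<lambda>y :: ('v + 'v set) \<Rightarrow> 'k. \<Sum>e\<in>M. y (Inr e))"
  have linM: "lin_functional (graph_lie_carrier V E) lM"
    unfolding lin_functional_def lM_def by (simp add: sum.distrib sum_distrib_left)
  have fM: "finite M" using matching_finite[OF s mM] .
  have cM': "(\<lambda>e. lM (delta (Inr e))) = (\<lambda>e. if e \<in> M then 1 else 0)"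
  proof
    fix e
    have "lM (delta (Inr e)) = (\<Sum>e'\<in>M. if e' = e then 1 else 0)"
      unfolding lM_def delta_def by (rule sum.cong) auto
    also have "\<dots> = (if e \<in> M then 1 else 0)" using fM by (simp add: sum.delta')
    finally show "lM (delta (Inr e)) = (if e \<in> M then 1 else 0)" .
  qed
  define I' where "I' = (Inl ` (V - \<Union>M) \<union> Inr ` E :: ('v + 'v set) set)"
  have stM: "stabilizer V E lM = {y. \<forall>i. i \<notin> I' \<longrightarrow> y i = 0}"
  proof -
    have "stabilizer V E lM = KERF V E (cA E (\<lambda>e. if e \<in> M then 1 else 0))"
      using stab_char[OF s linM] unfolding cM' .
    also have "\<dots> = {y. \<forall>i. i \<notin> I' \<longrightarrow> y i = 0}"
    proof (intro set_eqI iffI)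
      fix y :: "('v + 'v set) \<Rightarrow> 'k"
      assume y: "y \<in> KERF V E (cA E (\<lambda>e. if e \<in> M then 1 else 0))"
      then have h1: "\<forall>p\<in>\<Union>M. y (Inl p) = 0" using match_kernel[OF s mM, of y] unfolding KERF_def by blast
      have h2: "\<forall>i. i \<notin> Inl ` V \<union> Inr ` E \<longrightarrow> y i = 0" using y unfolding KERF_def by blast
      show "y \<in> {y. \<forall>i. i \<notin> I' \<longrightarrow> y i = 0}"
      proof (intro CollectI allI impI)
        fix i assume i: "i \<notin> I'"
        show "y i = 0"
        proof (cases i)
          case (Inl b)
          show ?thesis
          proof (cases "b \<in> \<Union>M")
            case True then show ?thesis using h1 Inl by blast
          next
            case False then have "i \<notin> Inl ` V \<union> Inr ` E" using i Inl unfolding I'_def by blast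
            then show ?thesis using h2 by blast
          qed
        next
          case (Inr e)
          then have "i \<notin> Inl ` V \<union> Inr ` E" using i unfolding I'_def by blast
          then show ?thesis using h2 by blast
        qed
      qed
    next
      fix y :: "('v + 'v set) \<Rightarrow> 'k"
      assume y: "y \<in> {y. \<forall>i. i \<notin> I' \<longrightarrow> y i = 0}"
      then have "\<forall>p\<in>\<Union>M. y (Inl p) = 0" unfolding I'_def by blast
      then have "\<forall>a\<in>V. (\<Sum>b\<in>V. cA E (\<lambda>e. if e \<in> M then 1 else 0) a b * y (Inl b)) = 0"
        using match_kernel[OF s mM, of y] by blast
      moreover have "\<forall>i. i \<notin> Inl ` V \<union> Inr ` E \<longrightarrow> y i = 0" using y unfolding I'_def by blast
      ultimately show "y \<in> KERF V E (cA E (\<lambda>e. if e \<in> M then 1 else 0))" unfolding KERF_def by blast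
    qed
    finally show ?thesis .
  qed
  have fI': "finite I'" unfolding I'_def using fV fE by simp
  have "VS.dim (stabilizer V E lM) = card I'" unfolding stM by (rule coord_dim[OF fI'])
  also have "\<dots> = card (V - \<Union>M) + card E" unfolding I'_def using fV fE by (simp add: card_sum_I)
  also have "card (V - \<Union>M) = card V - 2 * matching_number E"
    using UV fV cU by (metis card_Diff_subset finite_subset)
  finally have "VS.dim (stabilizer V E lM) = card V - 2 * matching_number E + card E" .
  then have "VS.dim (stabilizer V E lM) = N" unfolding N_def using le2 by linarith
  then have NS: "N \<in> S" unfolding S_def using linM by blast
  have "Min S = N" by (rule Min_eqI[OF finS lower NS])
  then show ?thesis using li gd unfolding N_def by simp
qed

end
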